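(* Let $g_1,\dots,g_m\in\mathbb{R}[\mathbf{x}]$, $\mathbf{X}=\{\mathbf{x}\in\mathbb{R}^n:g_1(\mathbf{x})\ge0,\dots,g_m(\mathbf{x})\ge0\}$, and assume the quadratic module $\mathcal{M}(\mathfrak{g})$ is Archimedean. Let $f\in\mathbb{R}[\mathbf{x}]$ be positive on $\mathbf{X}$, let $\mathscr{A}=\operatorname{supp}(f)\cup\bigcup_{j=1}^m\operatorname{supp}(g_j)$, and let $\mathbf{R}$ be a binary matrix whose columns are the sign symmetries of $\mathscr{A}$. Then $f=\sigma_0+\sum_{j=1}^m\sigma_jg_j$ for some sums of squares polynomials $\sigma_0,\dots,\sigma_m$ such that $\mathbf{R}^\intercal\alpha\equiv\mathbf{0}\pmod 2$ for every $\alpha\in\operatorname{supp}(\sigma_j)$, $j=0,\dots,m$.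
   Context: $\mathcal{M}(\mathfrak{g})=\{\sum_{j=0}^m\sigma_jg_j:\sigma_j\text{ sums of squares of polynomials}\}$ with $g_0=1$; it is Archimedean if $N-\|\mathbf{x}\|_2^2\in\mathcal{M}(\mathfrak{g})$ for some $N>0$. The sign symmetries of a finite set $\mathscr{A}\subseteq\mathbb{N}^n$ are all vectors $\mathbf{s}\in\{0,1\}^n$ with $\mathbf{s}^\intercal\alpha\equiv0\pmod2$ for all $\alpha\in\mathscr{A}$. $\operatorname{supp}$ denotes the set of exponents of monomials with nonzero coefficient. *)

theory Defs
  imports Complex_Main "HOL-Library.Poly_Mapping"
begin

text \<open>Real multivariate polynomials in the variables indexed by the finite type 'v
  (so n = CARD('v)): maps from exponent vectors (monomials) to coefficients.\<close>
type_synonym 'v rpoly = "('v \<Rightarrow>\<^sub>0 nat) \<Rightarrow>\<^sub>0 real"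

definition meval :: "('v \<Rightarrow>\<^sub>0 nat) \<Rightarrow> ('v \<Rightarrow> real) \<Rightarrow> real" where
  "meval \<alpha> x = (\<Prod>i\<in>Poly_Mapping.keys \<alpha>. x i ^ Poly_Mapping.lookup \<alpha> i)"

definition peval :: "'v rpoly \<Rightarrow> ('v \<Rightarrow> real) \<Rightarrow> real" where
  "peval p x = (\<Sum>\<alpha>\<in>Poly_Mapping.keys p. Poly_Mapping.lookup p \<alpha> * meval \<alpha> x)"

definition pvar :: "'v \<Rightarrow> 'v rpoly" where
  "pvar i = Poly_Mapping.single (Poly_Mapping.single i 1) 1"

definition pconst :: "real \<Rightarrow> 'v rpoly" where
  "pconst c = Poly_Mapping.single 0 c"

definition supp :: "'v rpoly \<Rightarrow> ('v \<Rightarrow>\<^sub>0 nat) set" where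
  "supp p = Poly_Mapping.keys p"

definition is_sos :: "'v rpoly \<Rightarrow> bool" where
  "is_sos p \<longleftrightarrow> (\<exists>qs. p = (\<Sum>q\<leftarrow>qs. q * q))"

definition quad_module :: "nat \<Rightarrow> (nat \<Rightarrow> 'v rpoly) \<Rightarrow> 'v rpoly set" where
  "quad_module m g = {p. \<exists>\<sigma>. (\<forall>j\<le>m. is_sos (\<sigma> j)) \<and>
      p = \<sigma> 0 + (\<Sum>j=1..m. \<sigma> j * g j)}"

definition archimedean :: "nat \<Rightarrow> (nat \<Rightarrow> 'v::finite rpoly) \<Rightarrow> bool" where
  "archimedean m g \<longleftrightarrow> (\<exists>N>0. pconst N - (\<Sum>i\<in>UNIV. pvar i * pvar i) \<in> quad_module m g)"

definition sign_symmetries :: "('v::finite \<Rightarrow>\<^sub>0 nat) set \<Rightarrow> ('v \<Rightarrow> nat) set" where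
  "sign_symmetries A = {s. (\<forall>i. s i \<in> {0,1}) \<and>
      (\<forall>\<alpha>\<in>A. even (\<Sum>i\<in>UNIV. s i * Poly_Mapping.lookup \<alpha> i))}"

end

theory Submission
  imports Defs "HOL-Analysis.Analysis"
begin

lemma pm_sum_single: "(p::('a \<Rightarrow>\<^sub>0 'b::comm_monoid_add)) = (\<Sum>\<alpha>\<in>Poly_Mapping.keys p. Poly_Mapping.single \<alpha> (Poly_Mapping.lookup p \<alpha>))"
proof (rule poly_mapping_eqI)
  fix k
  show "Poly_Mapping.lookup p k = Poly_Mapping.lookup (\<Sum>\<alpha>\<in>Poly_Mapping.keys p. Poly_Mapping.single \<alpha> (Poly_Mapping.lookup p \<alpha>)) k"
    by (cases "k \<in> Poly_Mapping.keys p")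
       (simp_all add: lookup_sum lookup_single when_def in_keys_iff)
qed

lemma pm_sum_single_superset:
  assumes "finite S" "Poly_Mapping.keys (p::('a \<Rightarrow>\<^sub>0 'b::comm_monoid_add)) \<subseteq> S"
  shows "p = (\<Sum>\<alpha>\<in>S. Poly_Mapping.single \<alpha> (Poly_Mapping.lookup p \<alpha>))"
proof -
  have "(\<Sum>\<alpha>\<in>S. Poly_Mapping.single \<alpha> (Poly_Mapping.lookup p \<alpha>)) = (\<Sum>\<alpha>\<in>Poly_Mapping.keys p. Poly_Mapping.single \<alpha> (Poly_Mapping.lookup p \<alpha>))"
    using assms by (intro sum.mono_neutral_right) (auto simp: in_keys_iff)
  then show ?thesis using pm_sum_single[of p] by simp
qed

lemma additive_mult_hom:
  fixes \<Phi> :: "('a::comm_monoid_add \<Rightarrow>\<^sub>0 'b::comm_semiring_0) \<Rightarrow> 'c::comm_semiring_0"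
  assumes add: "\<And>p q. \<Phi> (p + q) = \<Phi> p + \<Phi> q" and zero: "\<Phi> 0 = 0"
    and sing: "\<And>a b x y. \<Phi> (Poly_Mapping.single a x * Poly_Mapping.single b y) = \<Phi> (Poly_Mapping.single a x) * \<Phi> (Poly_Mapping.single b y)"
  shows "\<Phi> (p * q) = \<Phi> p * \<Phi> q"
proof -
  have sumh: "\<Phi> (sum f S) = (\<Sum>x\<in>S. \<Phi> (f x))" for f :: "'d \<Rightarrow> _" and S
    by (induction S rule: infinite_finite_induct) (auto simp: zero add)
  let ?P = "Poly_Mapping.keys p" and ?Q = "Poly_Mapping.keys q"
  let ?sp = "\<lambda>\<alpha>. Poly_Mapping.single \<alpha> (Poly_Mapping.lookup p \<alpha>)"
  let ?sq = "\<lambda>\<alpha>. Poly_Mapping.single \<alpha> (Poly_Mapping.lookup q \<alpha>)"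
  have "p * q = (\<Sum>\<alpha>\<in>?P. ?sp \<alpha>) * (\<Sum>\<beta>\<in>?Q. ?sq \<beta>)"
    using pm_sum_single[of p] pm_sum_single[of q] by simp
  also have "\<dots> = (\<Sum>\<alpha>\<in>?P. \<Sum>\<beta>\<in>?Q. ?sp \<alpha> * ?sq \<beta>)"
    by (simp add: sum_product)
  finally have "\<Phi> (p * q) = (\<Sum>\<alpha>\<in>?P. \<Sum>\<beta>\<in>?Q. \<Phi> (?sp \<alpha>) * \<Phi> (?sq \<beta>))"
    by (simp add: sumh sing)
  also have "\<dots> = (\<Sum>\<alpha>\<in>?P. \<Phi> (?sp \<alpha>)) * (\<Sum>\<beta>\<in>?Q. \<Phi> (?sq \<beta>))"
    by (simp add: sum_product)
  also have "\<dots> = \<Phi> p * \<Phi> q"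
    using pm_sum_single[of p] pm_sum_single[of q] by (metis sumh)
  finally show ?thesis .
qed



lemma meval_UNIV: "meval \<alpha> (x::'v::finite \<Rightarrow> real) = (\<Prod>i\<in>UNIV. x i ^ Poly_Mapping.lookup \<alpha> i)"
  unfolding meval_def by (intro prod.mono_neutral_left) (auto simp: in_keys_iff)

lemma meval_add: "meval (\<alpha> + \<beta>) (x::'v::finite \<Rightarrow> real) = meval \<alpha> x * meval \<beta> x"
  by (simp add: meval_UNIV lookup_add power_add prod.distrib)

lemma meval_zero[simp]: "meval 0 x = 1"
  by (simp add: meval_def)

lemma peval_superset:
  assumes "finite S" "Poly_Mapping.keys p \<subseteq> S"
  shows "peval p x = (\<Sum>\<alpha>\<in>S. Poly_Mapping.lookup p \<alpha> * meval \<alpha> x)"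
  unfolding peval_def using assms by (intro sum.mono_neutral_left) (auto simp: in_keys_iff)

lemma peval_add: "peval (p + q) x = peval p x + peval q x"
proof -
  let ?S = "Poly_Mapping.keys p \<union> Poly_Mapping.keys q"
  have "Poly_Mapping.keys (p + q) \<subseteq> ?S" by (rule keys_add)
  then show ?thesis
    by (subst (1 2 3) peval_superset[of ?S]) (auto simp: lookup_add algebra_simps sum.distrib)
qed

lemma peval_zero[simp]: "peval 0 x = 0" by (simp add: peval_def)

lemma peval_single[simp]: "peval (Poly_Mapping.single \<alpha> c) x = c * meval \<alpha> x"
  by (cases "c = 0") (simp_all add: peval_def)

lemma peval_mult: "peval (p * q) (x::'v::finite \<Rightarrow> real) = peval p x * peval q x"
  by (rule additive_mult_hom[where \<Phi>="\<lambda>p. peval p x"]) (simp_all add: peval_add mult_single meval_add)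

lemma peval_uminus: "peval (- p) x = - peval p x"
  using peval_add[of p "-p" x] by simp

lemma peval_diff: "peval (p - q) x = peval p x - peval q x"
  using peval_add[of p "-q" x] peval_uminus[of q x] by simp

lemma peval_sum: "peval (sum f S) x = (\<Sum>i\<in>S. peval (f i) x)"
  by (induction S rule: infinite_finite_induct) (auto simp: peval_add)

lemma peval_pconst[simp]: "peval (pconst c) x = c" by (simp add: pconst_def)
lemma peval_one[simp]: "peval 1 x = 1" using peval_pconst[of 1 x] by (simp add: pconst_def)

lemma peval_pvar[simp]: "peval (pvar i) (x::'v::finite \<Rightarrow> real) = x i"
  by (simp add: pvar_def meval_def)

lemma peval_power: "peval (p ^ n) (x::'v::finite \<Rightarrow> real) = peval p x ^ n"
  by (induction n) (simp_all add: peval_mult)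

lemma peval_prod: "peval (prod f S) (x::'v::finite \<Rightarrow> real) = (\<Prod>i\<in>S. peval (f i) x)"
  by (induction S rule: infinite_finite_induct) (auto simp: peval_mult)

lemma lookup_pconst_mult: "Poly_Mapping.lookup (pconst c * p) \<alpha> = c * Poly_Mapping.lookup p \<alpha>"
proof -
  have "pconst c * p = Poly_Mapping.map ((*) c) p" by (simp add: pconst_def mult_map_scale_conv_mult)
  then show ?thesis by (simp add: map.rep_eq when_def)
qed

lemma pconst_add: "pconst (a + b) = pconst a + pconst b" by (simp add: pconst_def single_add)
lemma pconst_mult: "pconst (a * b) = pconst a * pconst b" by (simp add: pconst_def mult_single)
lemma pconst_one[simp]: "pconst 1 = 1" by (simp add: pconst_def)
lemma pconst_zero[simp]: "pconst 0 = 0" by (simp add: pconst_def)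
lemma pconst_uminus: "pconst (- a) = - pconst a" by (simp add: pconst_def single_uminus)
lemma pconst_diff: "pconst (a - b) = pconst a - pconst b" by (simp add: pconst_def single_diff)

definition pmono :: "('v::finite \<Rightarrow>\<^sub>0 nat) \<Rightarrow> 'v rpoly" where
  "pmono \<alpha> = (\<Prod>i\<in>UNIV. pvar i ^ Poly_Mapping.lookup \<alpha> i)"

lemma pvar_power: "pvar i ^ k = Poly_Mapping.single (Poly_Mapping.single i k) 1"
  by (induction k) (simp_all add: pvar_def mult_single flip: single_add)

lemma prod_single: "(\<Prod>i\<in>S. Poly_Mapping.single (f i) (1::real)) = Poly_Mapping.single (\<Sum>i\<in>S. f i) 1"
  by (induction S rule: infinite_finite_induct) (simp_all add: mult_single)

lemma sum_single_pm: "(\<Sum>i\<in>UNIV. Poly_Mapping.single i (Poly_Mapping.lookup \<alpha> i)) = (\<alpha>::'v::finite \<Rightarrow>\<^sub>0 nat)"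
  by (rule poly_mapping_eqI) (simp add: lookup_sum lookup_single when_def)

lemma single_mono: "Poly_Mapping.single \<alpha> c = pconst c * pmono (\<alpha>::'v::finite \<Rightarrow>\<^sub>0 nat)"
  by (simp add: pmono_def pvar_power prod_single sum_single_pm pconst_def mult_single)



lemma is_sos_0[simp]: "is_sos 0"
  unfolding is_sos_def by (rule exI[of _ "[]"]) simp

lemma is_sos_sq[simp]: "is_sos (q * q)"
  unfolding is_sos_def by (rule exI[of _ "[q]"]) simp

lemma is_sos_add: "is_sos a \<Longrightarrow> is_sos b \<Longrightarrow> is_sos (a + b)"
proof -
  assume "is_sos a" "is_sos b"
  then obtain qs rs where "a = (\<Sum>q\<leftarrow>qs. q * q)" "b = (\<Sum>q\<leftarrow>rs. q * q)" unfolding is_sos_def by blast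
  then have "a + b = (\<Sum>q\<leftarrow>qs @ rs. q * q)" by simp
  then show ?thesis unfolding is_sos_def by blast
qed

lemma sum_list_sq_mult:
  fixes qs rs :: "'a::comm_ring_1 list"
  shows "(\<Sum>q\<leftarrow>qs. q * q) * (\<Sum>r\<leftarrow>rs. r * r) = (\<Sum>p\<leftarrow>concat (map (\<lambda>q. map (\<lambda>r. q * r) rs) qs). p * p)"
proof (induction qs)
  case Nil then show ?case by simp
next
  case (Cons a qs)
  have e: "(\<Sum>r\<leftarrow>rs. (a*r) * (a*r)) = a * a * (\<Sum>r\<leftarrow>rs. r * r)"
  proof -
    have "(\<Sum>r\<leftarrow>rs. (a*r) * (a*r)) = (\<Sum>r\<leftarrow>rs. (a*a) * (r*r))"
      by (intro arg_cong[where f=sum_list] map_cong) (simp_all add: mult_ac)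
    also have "\<dots> = a * a * (\<Sum>r\<leftarrow>rs. r * r)" by (rule sum_list_const_mult)
    finally show ?thesis .
  qed
  have "(\<Sum>q\<leftarrow>a # qs. q * q) * (\<Sum>r\<leftarrow>rs. r * r) = a * a * (\<Sum>r\<leftarrow>rs. r * r) + (\<Sum>q\<leftarrow>qs. q * q) * (\<Sum>r\<leftarrow>rs. r * r)"
    by (simp add: distrib_right)
  also have "\<dots> = (\<Sum>r\<leftarrow>rs. (a*r) * (a*r)) + (\<Sum>p\<leftarrow>concat (map (\<lambda>q. map (\<lambda>r. q * r) rs) qs). p * p)"
    using Cons e by simp
  also have "\<dots> = (\<Sum>p\<leftarrow>concat (map (\<lambda>q. map (\<lambda>r. q * r) rs) (a # qs)). p * p)"
    by (simp add: comp_def)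
  finally show ?case .
qed

lemma is_sos_mult: "is_sos a \<Longrightarrow> is_sos b \<Longrightarrow> is_sos (a * b)"
proof -
  assume "is_sos a" "is_sos b"
  then obtain qs rs where "a = (\<Sum>q\<leftarrow>qs. q * q)" "b = (\<Sum>q\<leftarrow>rs. q * q)" unfolding is_sos_def by blast
  then have "a * b = (\<Sum>p\<leftarrow>concat (map (\<lambda>q. map (\<lambda>r. q * r) rs) qs). p * p)" by (simp add: sum_list_sq_mult)
  then show ?thesis unfolding is_sos_def by blast
qed

lemma is_sos_pconst: "c \<ge> 0 \<Longrightarrow> is_sos (pconst c)"
proof -
  assume "c \<ge> 0"
  then have "pconst c = pconst (sqrt c) * pconst (sqrt c)"
    by (simp flip: pconst_mult)
  then show ?thesis by (metis is_sos_sq)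
qed

lemma is_sos_scale: "c \<ge> 0 \<Longrightarrow> is_sos a \<Longrightarrow> is_sos (pconst c * a)"
  by (simp add: is_sos_mult is_sos_pconst)

lemma is_sos_sum: "(\<And>i. i \<in> S \<Longrightarrow> is_sos (f i)) \<Longrightarrow> is_sos (sum f S)"
  by (induction S rule: infinite_finite_induct) (auto simp: is_sos_add)

lemma is_sos_1[simp]: "is_sos 1"
  using is_sos_sq[of 1] by simp

lemma is_sos_power2: "is_sos (q ^ (2*k))"
proof -
  have "q ^ (2*k) = q^k * q^k" by (simp add: mult_2 power_add)
  then show ?thesis by (metis is_sos_sq)
qed

lemma peval_sos_nonneg: "is_sos p \<Longrightarrow> peval p (x::'v::finite \<Rightarrow> real) \<ge> 0"
proof -
  assume "is_sos p"
  then obtain qs where p: "p = (\<Sum>q\<leftarrow>qs. q * q)" unfolding is_sos_def by blast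
  have "peval (\<Sum>q\<leftarrow>qs. q * q) x \<ge> 0"
    by (induction qs) (simp_all add: peval_add peval_mult)
  then show ?thesis using p by simp
qed

lemma is_sos_hom:
  assumes add: "\<And>p q. \<Phi> (p + q) = \<Phi> p + \<Phi> q" and zero: "\<Phi> 0 = 0"
    and mult: "\<And>p q. \<Phi> (p * q) = \<Phi> p * \<Phi> q"
  shows "is_sos p \<Longrightarrow> is_sos (\<Phi> p)"
proof -
  assume "is_sos p"
  then obtain qs where p: "p = (\<Sum>q\<leftarrow>qs. q * q)" unfolding is_sos_def by blast
  have "\<Phi> (\<Sum>q\<leftarrow>qs. q * q) = (\<Sum>q\<leftarrow>map \<Phi> qs. q * q)"
    by (induction qs) (simp_all add: add zero mult)
  then show ?thesis unfolding is_sos_def p by blast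
qed



section \<open>Preorderings\<close>

definition preord :: "'v rpoly set \<Rightarrow> bool" where
  "preord P \<longleftrightarrow> (\<forall>a\<in>P. \<forall>b\<in>P. a + b \<in> P \<and> a * b \<in> P) \<and> (\<forall>q. q * q \<in> P)"

lemma preord_add: "preord P \<Longrightarrow> a \<in> P \<Longrightarrow> b \<in> P \<Longrightarrow> a + b \<in> P"
  by (simp add: preord_def)
lemma preord_mult: "preord P \<Longrightarrow> a \<in> P \<Longrightarrow> b \<in> P \<Longrightarrow> a * b \<in> P"
  by (simp add: preord_def)
lemma preord_sq: "preord P \<Longrightarrow> q * q \<in> P"
  by (simp add: preord_def)
lemma preord_0: "preord P \<Longrightarrow> 0 \<in> P"
  using preord_sq[of P 0] by simp
lemma preord_1: "preord P \<Longrightarrow> 1 \<in> P"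
  using preord_sq[of P 1] by simp
lemma preord_pconst: "preord P \<Longrightarrow> c \<ge> 0 \<Longrightarrow> pconst c \<in> P"
proof -
  assume "preord P" "c \<ge> 0"
  then have "pconst c = pconst (sqrt c) * pconst (sqrt c)" by (simp flip: pconst_mult)
  then show ?thesis using preord_sq[OF \<open>preord P\<close>] by metis
qed
lemma preord_scale: "preord P \<Longrightarrow> c \<ge> 0 \<Longrightarrow> a \<in> P \<Longrightarrow> pconst c * a \<in> P"
  by (simp add: preord_mult preord_pconst)

lemma preord_sos: "preord P \<Longrightarrow> is_sos s \<Longrightarrow> s \<in> P"
proof -
  assume P: "preord P" and "is_sos s"
  then obtain qs where s: "s = (\<Sum>q\<leftarrow>qs. q * q)" unfolding is_sos_def by blast
  have "(\<Sum>q\<leftarrow>qs. q * q) \<in> P"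
    by (induction qs) (simp_all add: P preord_0 preord_add preord_sq)
  then show ?thesis using s by simp
qed

lemma minus_one_univ: "preord P \<Longrightarrow> - 1 \<in> P \<Longrightarrow> a \<in> P"
proof -
  assume P: "preord P" and m: "- 1 \<in> P"
  let ?u = "pconst (1/2) * (a + 1)" and ?w = "pconst (1/2) * (a - 1)"
  have "a = ?u * ?u + (- 1) * (?w * ?w)"
  proof -
    have "pconst (1/2) * pconst (1/2) = (pconst (1/4) :: 'v rpoly)" by (simp flip: pconst_mult)
    moreover have "pconst (1/4) * 4 = (1 :: 'v rpoly)"
    proof -
      have "(4 :: 'v rpoly) = pconst 4" by (simp add: pconst_def)
      moreover have "pconst (1/4) * pconst 4 = (1 :: 'v rpoly)" by (simp flip: pconst_mult)
      ultimately show ?thesis by simp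
    qed
    moreover have "?u * ?u + (- 1) * (?w * ?w) = (pconst (1/2) * pconst (1/2)) * ((a+1)*(a+1) - (a - 1) * (a - 1))"
      by (simp add: algebra_simps)
    moreover have "(a+1)*(a+1) - (a - 1) * (a - 1) = 4 * a" by (simp add: algebra_simps)
    ultimately show ?thesis by (metis mult.assoc mult.commute mult_1)
  qed
  also have "\<dots> \<in> P" using P m by (intro preord_add preord_mult preord_sq)
  finally show ?thesis .
qed

lemma pconst_neg_in: "preord P \<Longrightarrow> c < 0 \<Longrightarrow> pconst c \<in> P \<Longrightarrow> - 1 \<in> P"
proof -
  assume P: "preord P" and c: "c < 0" and "pconst c \<in> P"
  then have "pconst (-1/c) * pconst c \<in> P" by (intro preord_scale) auto
  moreover have "pconst (-1/c) * pconst c = (- 1 :: 'v rpoly)"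
    using c by (simp flip: pconst_mult add: pconst_uminus)
  ultimately show ?thesis by metis
qed

lemma maximal_total:
  fixes P :: "'v rpoly set"
  assumes P: "preord P" "S \<subseteq> P" "- 1 \<notin> P"
    and max: "\<And>Q. preord Q \<Longrightarrow> S \<subseteq> Q \<Longrightarrow> - 1 \<notin> Q \<Longrightarrow> P \<subseteq> Q \<Longrightarrow> Q = P"
  shows "a \<in> P \<or> - a \<in> P"
proof (rule ccontr)
  assume na: "\<not> (a \<in> P \<or> - a \<in> P)"
  have ext: "\<exists>p1\<in>P. \<exists>p2\<in>P. - 1 = p1 + b * p2" if nb: "b \<notin> P" for b :: "'v rpoly"
  proof (rule ccontr)
    assume nex: "\<not> ?thesis"
    let ?Q = "{p1 + b * p2 | p1 p2. p1 \<in> P \<and> p2 \<in> P}"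
    have "preord ?Q"
      unfolding preord_def
    proof (intro conjI ballI allI)
      fix x y assume "x \<in> ?Q" "y \<in> ?Q"
      then obtain p1 p2 p3 p4 where x: "x = p1 + b * p2" and y: "y = p3 + b * p4"
        and ps: "p1 \<in> P" "p2 \<in> P" "p3 \<in> P" "p4 \<in> P" by blast
      have "x + y = (p1 + p3) + b * (p2 + p4)" using x y by (simp add: algebra_simps)
      then show "x + y \<in> ?Q" using ps P(1) by (blast intro: preord_add)
      have "x * y = (p1 * p3 + (b * b) * (p2 * p4)) + b * (p1 * p4 + p2 * p3)"
        using x y by (simp add: algebra_simps)
      then show "x * y \<in> ?Q" using ps P(1)
        by (blast intro: preord_add preord_mult preord_sq)
    next
      fix q :: "'v rpoly"
      have "q * q = q * q + b * 0" by simp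
      then show "q * q \<in> ?Q" using P(1) by (blast intro: preord_sq preord_0)
    qed
    moreover have "P \<subseteq> ?Q"
    proof
      fix x assume "x \<in> P"
      moreover have "x = x + b * 0" by simp
      ultimately show "x \<in> ?Q" using P(1) preord_0 by blast
    qed
    moreover have "- 1 \<notin> ?Q" using nex by blast
    moreover have "b \<in> ?Q"
    proof -
      have "b = 0 + b * 1" by simp
      then show ?thesis using P(1) preord_0 preord_1 by blast
    qed
    ultimately show False using max[of ?Q] P(2) nb by blast
  qed
  obtain p1 p2 where p: "p1 \<in> P" "p2 \<in> P" "- 1 = p1 + a * p2" using ext na by blast
  obtain p3 p4 where q: "p3 \<in> P" "p4 \<in> P" "- 1 = p3 + (- a) * p4" using ext na by blast
  have e1: "a * p2 = - 1 - p1" by (simp add: p(3))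
  have "a * p4 = (p3 + (- a) * p4) * (-1) + p3" by (simp add: algebra_simps)
  also have "\<dots> = 1 + p3" unfolding q(3)[symmetric] by simp
  finally have e2: "a * p4 = 1 + p3" .
  have "(a * a) * (p2 * p4) = (a * p2) * (a * p4)" by (simp add: mult_ac)
  also have "\<dots> = (- 1 - p1) * (1 + p3)" by (simp add: e1 e2)
  finally have e3: "(a * a) * (p2 * p4) = (- 1 - p1) * (1 + p3)" .
  have "- 1 = p1 + p3 + p1 * p3 + (a * a) * (p2 * p4)"
    unfolding e3 by (simp add: algebra_simps)
  also have "\<dots> \<in> P"
    using p q P(1) by (intro preord_add preord_mult preord_sq)
  finally show False using P(3) by simp
qed


locale tot_ord =
  fixes P :: "'v::finite rpoly set"
  assumes pre: "preord P" and proper: "- 1 \<notin> P" and tot: "\<And>a. a \<in> P \<or> - a \<in> P"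
    and arch: "\<And>a. \<exists>k. pconst k - a \<in> P"
begin

definition phi :: "'v rpoly \<Rightarrow> real" where
  "phi a = Sup {r. a - pconst r \<in> P}"

lemma no_neg_const: "c < 0 \<Longrightarrow> pconst c \<notin> P"
  using pconst_neg_in[OF pre] proper by blast

lemma R_ne: "{r. a - pconst r \<in> P} \<noteq> {}"
proof -
  obtain k where "pconst k - (- a) \<in> P" using arch by blast
  then have "a - pconst (- k) \<in> P" by (simp add: pconst_uminus add.commute)
  then show ?thesis by blast
qed

lemma R_bdd: "bdd_above {r. a - pconst r \<in> P}"
proof -
  obtain k where k: "pconst k - a \<in> P" using arch by blast
  have "r \<le> k" if "a - pconst r \<in> P" for r
  proof (rule ccontr)
    assume "\<not> r \<le> k"
    have "(pconst k - a) + (a - pconst r) \<in> P" using k that pre by (intro preord_add)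
    then have "pconst (k - r) \<in> P" by (simp add: pconst_diff)
    with no_neg_const \<open>\<not> r \<le> k\<close> show False by simp
  qed
  then show ?thesis unfolding bdd_above_def by blast
qed

lemma below_phi: "r < phi a \<Longrightarrow> a - pconst r \<in> P"
proof -
  assume "r < phi a"
  then obtain r' where r': "a - pconst r' \<in> P" "r < r'"
    using less_cSup_iff[OF R_ne R_bdd] unfolding phi_def by auto
  have "(a - pconst r') + pconst (r' - r) \<in> P"
    using r' pre by (intro preord_add preord_pconst) auto
  then show ?thesis by (simp add: pconst_diff)
qed

lemma above_phi: "phi a < r \<Longrightarrow> pconst r - a \<in> P"
proof -
  assume "phi a < r"
  then have "a - pconst r \<notin> P"
    using cSup_upper[OF _ R_bdd, of r a] unfolding phi_def by force
  then show ?thesis using tot[of "a - pconst r"] by simp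
qed

lemma phi_nonneg: "a \<in> P \<Longrightarrow> phi a \<ge> 0"
  unfolding phi_def by (rule cSup_upper[OF _ R_bdd]) simp

lemma phi_eqI:
  assumes lo: "\<And>r. r < c \<Longrightarrow> a - pconst r \<in> P" and hi: "\<And>r. c < r \<Longrightarrow> pconst r - a \<in> P"
  shows "phi a = c"
proof (rule ccontr)
  assume "phi a \<noteq> c"
  then consider "phi a < c" | "c < phi a" by linarith
  then show False
  proof cases
    case 1
    define r where "r = (phi a + c) / 2"
    have "a - pconst r \<in> P" using lo 1 by (simp add: r_def)
    then have "r \<le> phi a" unfolding phi_def by (intro cSup_upper[OF _ R_bdd]) simp
    then show False using 1 by (simp add: r_def)
  next
    case 2
    define r where "r = (phi a + c) / 2"
    define r' where "r' = (r + c) / 2"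
    have "a - pconst r \<in> P" using below_phi 2 by (simp add: r_def)
    moreover have "pconst r' - a \<in> P" using hi 2 by (simp add: r_def r'_def)
    ultimately have "(pconst r' - a) + (a - pconst r) \<in> P" using pre by (intro preord_add)
    then have "pconst (r' - r) \<in> P" by (simp add: pconst_diff)
    moreover have "r' - r < 0" using 2 by (simp add: r_def r'_def)
    ultimately show False using no_neg_const by blast
  qed
qed

lemma phi_pconst: "phi (pconst c) = c"
proof (rule phi_eqI)
  fix r assume "r < c"
  then show "pconst c - pconst r \<in> P" using pre by (simp add: preord_pconst flip: pconst_diff)
next
  fix r assume "c < r"
  then show "pconst r - pconst c \<in> P" using pre by (simp add: preord_pconst flip: pconst_diff)
qed

lemma pc_sum1: "x + y = z \<Longrightarrow> (a - pconst x) + (b - pconst y) = a + b - pconst z"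
proof -
  assume "x + y = z" then have "pconst z = pconst x + pconst y" by (metis pconst_add)
  then show ?thesis by (simp add: algebra_simps)
qed

lemma pc_sum2: "x + y = z \<Longrightarrow> (pconst x - a) + (pconst y - b) = pconst z - (a + b)"
proof -
  assume "x + y = z" then have e: "pconst z = pconst x + pconst y" by (metis pconst_add)
  show ?thesis unfolding e by (simp add: algebra_simps)
qed

lemma half2: "pconst (1/2) * (2 * X) = (X :: 'v rpoly)"
proof -
  have "(2 :: 'v rpoly) = pconst 2" by (simp add: pconst_def)
  moreover have "pconst (1/2) * pconst 2 = (1 :: 'v rpoly)" by (simp flip: pconst_mult)
  ultimately show ?thesis by (metis mult.assoc mult_1)
qed

lemma phi_add: "phi (a + b) = phi a + phi b"
proof (rule phi_eqI)
  fix r assume r: "r < phi a + phi b"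
  define d where "d = (phi a + phi b - r) / 2"
  have "a - pconst (phi a - d) \<in> P" "b - pconst (phi b - d) \<in> P"
    using r by (auto intro!: below_phi simp: d_def)
  then have "(a - pconst (phi a - d)) + (b - pconst (phi b - d)) \<in> P" using pre by (intro preord_add)
  moreover have "(a - pconst (phi a - d)) + (b - pconst (phi b - d)) = a + b - pconst r"
    by (rule pc_sum1) (simp add: d_def field_simps)
  ultimately show "a + b - pconst r \<in> P" by simp
next
  fix r assume r: "phi a + phi b < r"
  define d where "d = (r - phi a - phi b) / 2"
  have "pconst (phi a + d) - a \<in> P" "pconst (phi b + d) - b \<in> P"
    using r by (auto intro!: above_phi simp: d_def)
  then have "(pconst (phi a + d) - a) + (pconst (phi b + d) - b) \<in> P" using pre by (intro preord_add)
  moreover have "(pconst (phi a + d) - a) + (pconst (phi b + d) - b) = pconst r - (a + b)"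
    by (rule pc_sum2) (simp add: d_def field_simps)
  ultimately show "pconst r - (a + b) \<in> P" by simp
qed

lemma phi_zero: "phi 0 = 0" using phi_pconst[of 0] by simp

lemma phi_uminus: "phi (- a) = - phi a"
  using phi_add[of a "- a"] phi_zero by simp

lemma phi_diff: "phi (a - b) = phi a - phi b"
  using phi_add[of a "- b"] phi_uminus[of b] by simp

lemma phi_scale_pos: "c > 0 \<Longrightarrow> phi (pconst c * a) = c * phi a"
proof (rule phi_eqI)
  fix r assume c: "c > 0" and r: "r < c * phi a"
  then have "a - pconst (r / c) \<in> P" by (intro below_phi) (simp add: field_simps)
  then have "pconst c * (a - pconst (r / c)) \<in> P" using pre c by (intro preord_scale) auto
  moreover have "pconst c * (a - pconst (r / c)) = pconst c * a - pconst r"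
    using c by (simp add: algebra_simps flip: pconst_mult)
  ultimately show "pconst c * a - pconst r \<in> P" by simp
next
  fix r assume c: "c > 0" and r: "c * phi a < r"
  then have "pconst (r / c) - a \<in> P" by (intro above_phi) (simp add: field_simps)
  then have "pconst c * (pconst (r / c) - a) \<in> P" using pre c by (intro preord_scale) auto
  moreover have "pconst c * (pconst (r / c) - a) = pconst r - pconst c * a"
    using c by (simp add: algebra_simps flip: pconst_mult)
  ultimately show "pconst r - pconst c * a \<in> P" by simp
qed

lemma phi_scale: "phi (pconst c * a) = c * phi a"
proof -
  consider "c > 0" | "c = 0" | "c < 0" by linarith
  then show ?thesis
  proof cases
    case 1 then show ?thesis by (rule phi_scale_pos)
  next
    case 2 then show ?thesis by (simp add: phi_zero)
  next
    case 3
    have "pconst c * a = - (pconst (- c) * a)" by (simp add: pconst_uminus)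
    then show ?thesis using phi_scale_pos[of "- c" a] 3 by (simp add: phi_uminus)
  qed
qed

lemma phi_mult0:
  assumes a: "phi a = 0" and b: "phi b = 0"
  shows "phi (a * b) = 0"
proof (rule phi_eqI)
  fix r :: real assume r: "r < 0"
  define e where "e = sqrt (- r)"
  have e: "e > 0" "e * e = - r" using r by (simp_all add: e_def)
  have "a - pconst (- e) \<in> P" "b - pconst (- e) \<in> P" "pconst e - a \<in> P" "pconst e - b \<in> P"
    using e a b by (auto intro!: below_phi above_phi)
  then have "(a - pconst (- e)) * (b - pconst (- e)) + (pconst e - a) * (pconst e - b) \<in> P"
    using pre by (intro preord_add preord_mult)
  then have "pconst (1/2) * ((a - pconst (- e)) * (b - pconst (- e)) + (pconst e - a) * (pconst e - b)) \<in> P"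
    using pre by (intro preord_scale) auto
  moreover have "pconst (1/2) * ((a - pconst (- e)) * (b - pconst (- e)) + (pconst e - a) * (pconst e - b)) = a * b - pconst r"
  proof -
    have eq: "(a - pconst (- e)) * (b - pconst (- e)) + (pconst e - a) * (pconst e - b) = 2 * (a * b + pconst e * pconst e)"
      by (simp add: pconst_uminus algebra_simps)
    have e2: "pconst e * pconst e = - pconst r" using e by (simp add: pconst_uminus flip: pconst_mult)
    show ?thesis unfolding eq half2 e2 by simp
  qed
  ultimately show "a * b - pconst r \<in> P" by simp
next
  fix r :: real assume r: "0 < r"
  define e where "e = sqrt r"
  have e: "e > 0" "e * e = r" using r by (simp_all add: e_def)
  have "a - pconst (- e) \<in> P" "b - pconst (- e) \<in> P" "pconst e - a \<in> P" "pconst e - b \<in> P"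
    using e a b by (auto intro!: below_phi above_phi)
  then have "(a - pconst (- e)) * (pconst e - b) + (pconst e - a) * (b - pconst (- e)) \<in> P"
    using pre by (intro preord_add preord_mult)
  then have "pconst (1/2) * ((a - pconst (- e)) * (pconst e - b) + (pconst e - a) * (b - pconst (- e))) \<in> P"
    using pre by (intro preord_scale) auto
  moreover have "pconst (1/2) * ((a - pconst (- e)) * (pconst e - b) + (pconst e - a) * (b - pconst (- e))) = pconst r - a * b"
  proof -
    have eq: "(a - pconst (- e)) * (pconst e - b) + (pconst e - a) * (b - pconst (- e)) = 2 * (pconst e * pconst e - a * b)"
      by (simp add: pconst_uminus algebra_simps)
    have e2: "pconst e * pconst e = pconst r" using e by (simp flip: pconst_mult)
    show ?thesis unfolding eq half2 e2 by simp
  qed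
  ultimately show "pconst r - a * b \<in> P" by simp
qed

end



context tot_ord
begin

lemma phi_mult: "phi (a * b) = phi a * phi b"
proof -
  define a' where "a' = a - pconst (phi a)"
  define b' where "b' = b - pconst (phi b)"
  have a0: "phi a' = 0" and b0: "phi b' = 0" by (simp_all add: a'_def b'_def phi_diff phi_pconst)
  have "a * b = a' * b' + pconst (phi a) * b' + pconst (phi b) * a' + pconst (phi a * phi b)"
    by (simp add: a'_def b'_def algebra_simps pconst_mult)
  then have "phi (a * b) = phi (a' * b') + phi (pconst (phi a) * b') + phi (pconst (phi b) * a') + phi (pconst (phi a * phi b))"
    by (simp add: phi_add)
  also have "\<dots> = phi a * phi b"
    by (simp add: phi_mult0[OF a0 b0] phi_scale a0 b0 phi_pconst)
  finally show ?thesis .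
qed

lemma phi_one: "phi 1 = 1" using phi_pconst[of 1] by simp

lemma phi_sum: "phi (sum f S) = (\<Sum>i\<in>S. phi (f i))"
  by (induction S rule: infinite_finite_induct) (simp_all add: phi_zero phi_add)

lemma phi_prod: "phi (prod f S) = (\<Prod>i\<in>S. phi (f i))"
  by (induction S rule: infinite_finite_induct) (simp_all add: phi_one phi_mult)

lemma phi_power: "phi (a ^ n) = phi a ^ n"
  by (induction n) (simp_all add: phi_one phi_mult)

lemma phi_eval: "phi p = peval p (\<lambda>i. phi (pvar i))"
proof -
  have "phi p = phi (\<Sum>\<alpha>\<in>Poly_Mapping.keys p. Poly_Mapping.single \<alpha> (Poly_Mapping.lookup p \<alpha>))"
    using pm_sum_single[of p] by simp
  also have "\<dots> = (\<Sum>\<alpha>\<in>Poly_Mapping.keys p. Poly_Mapping.lookup p \<alpha> * meval \<alpha> (\<lambda>i. phi (pvar i)))"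
    by (simp add: phi_sum single_mono phi_scale pmono_def phi_prod phi_power meval_UNIV)
  also have "\<dots> = peval p (\<lambda>i. phi (pvar i))" by (simp add: peval_def)
  finally show ?thesis .
qed

end



lemma weak_pss:
  fixes T :: "'v::finite rpoly set" and G h :: "'v rpoly"
  assumes T: "preord T" and archT: "\<And>a. \<exists>k. pconst k - a \<in> T" and hT: "h \<in> T"
    and pos: "\<And>x. peval h x \<ge> 0 \<Longrightarrow> peval G x > 0"
  shows "\<exists>t\<in>T. \<exists>t'\<in>T. G * t = 1 + t'"
proof (rule ccontr)
  assume nex: "\<not> ?thesis"
  define S where "S = {a - G * b | a b. a \<in> T \<and> b \<in> T}"
  have S: "preord S"
    unfolding preord_def
  proof (intro conjI ballI allI)
    fix x y assume "x \<in> S" "y \<in> S"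
    then obtain p1 p2 p3 p4 where x: "x = p1 - G * p2" and y: "y = p3 - G * p4"
      and ps: "p1 \<in> T" "p2 \<in> T" "p3 \<in> T" "p4 \<in> T" unfolding S_def by blast
    have "x + y = (p1 + p3) - G * (p2 + p4)" unfolding x y by (simp add: algebra_simps)
    then show "x + y \<in> S" unfolding S_def using ps T by (blast intro: preord_add)
    have "x * y = (p1 * p3 + (G * G) * (p2 * p4)) - G * (p1 * p4 + p2 * p3)"
      unfolding x y by (simp add: algebra_simps)
    moreover have "p1 * p3 + (G * G) * (p2 * p4) \<in> T" "p1 * p4 + p2 * p3 \<in> T"
      using ps T by (auto intro!: preord_add preord_mult preord_sq)
    ultimately show "x * y \<in> S" unfolding S_def by blast
  next
    fix q :: "'v rpoly"
    have "q * q = q * q - G * 0" by simp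
    then show "q * q \<in> S" unfolding S_def using T preord_sq preord_0 by blast
  qed
  have TS: "T \<subseteq> S"
  proof
    fix x assume "x \<in> T"
    moreover have "x = x - G * 0" by simp
    ultimately show "x \<in> S" unfolding S_def using T preord_0 by blast
  qed
  have GS: "- G \<in> S"
  proof -
    have "- G = 0 - G * 1" by simp
    then show ?thesis unfolding S_def using T preord_0 preord_1 by blast
  qed
  have m1S: "- 1 \<notin> S"
  proof
    assume "- 1 \<in> S"
    then obtain a b where ab: "a \<in> T" "b \<in> T" "- 1 = a - G * b" unfolding S_def by blast
    then have "G * b = 1 + a" by (simp add: algebra_simps)
    with ab nex show False by blast
  qed
  define F where "F = {Q. preord Q \<and> S \<subseteq> Q \<and> - 1 \<notin> Q}"
  have "\<forall>C\<in>chains F. \<exists>U\<in>F. \<forall>X\<in>C. X \<subseteq> U"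
  proof
    fix C assume C: "C \<in> chains F"
    show "\<exists>U\<in>F. \<forall>X\<in>C. X \<subseteq> U"
    proof (cases "C = {}")
      case True then show ?thesis using S m1S unfolding F_def by blast
    next
      case False
      have CF: "C \<subseteq> F" using chainsD2[OF C] .
      have ch: "X \<subseteq> Y \<or> Y \<subseteq> X" if "X \<in> C" "Y \<in> C" for X Y using chainsD[OF C that] .
      have "preord (\<Union>C)"
        unfolding preord_def
      proof (intro conjI ballI allI)
        fix a b assume "a \<in> \<Union>C" "b \<in> \<Union>C"
        then obtain X Y where XY: "X \<in> C" "Y \<in> C" "a \<in> X" "b \<in> Y" by blast
        then consider "X \<subseteq> Y" | "Y \<subseteq> X" using ch by blast
        then obtain Z where Z: "Z \<in> C" "a \<in> Z" "b \<in> Z" using XY by (cases; blast)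
        then have pZ: "preord Z" using CF unfolding F_def by blast
        show "a + b \<in> \<Union>C" using Z pZ by (blast intro: preord_add)
        show "a * b \<in> \<Union>C" using Z pZ by (blast intro: preord_mult)
      next
        fix q :: "'v rpoly"
        obtain X where "X \<in> C" using False by blast
        then show "q * q \<in> \<Union>C" using CF unfolding F_def by (blast intro: preord_sq)
      qed
      moreover have "S \<subseteq> \<Union>C" using False CF unfolding F_def by blast
      moreover have "- 1 \<notin> \<Union>C" using CF unfolding F_def by blast
      ultimately show ?thesis unfolding F_def by blast
    qed
  qed
  from Zorn_Lemma2[OF this] obtain P where PF: "P \<in> F" and Pmax: "\<forall>X\<in>F. P \<subseteq> X \<longrightarrow> X = P" by blast
  have P: "preord P" "S \<subseteq> P" "- 1 \<notin> P" using PF unfolding F_def by auto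
  have tot: "a \<in> P \<or> - a \<in> P" for a
    by (rule maximal_total[OF P]) (use Pmax in \<open>auto simp: F_def\<close>)
  have archP: "\<exists>k. pconst k - a \<in> P" for a using archT[of a] TS P(2) by blast
  interpret tot_ord P using P(1) P(3) tot archP by unfold_locales auto
  define x where "x = (\<lambda>i. phi (pvar i))"
  have "peval h x \<ge> 0"
    using phi_nonneg[of h] hT TS P(2) phi_eval[of h] unfolding x_def by auto
  moreover have "peval G x \<le> 0"
  proof -
    have "phi (- G) \<ge> 0" using phi_nonneg GS P(2) by blast
    then show ?thesis using phi_eval[of G] phi_uminus[of G] unfolding x_def by simp
  qed
  ultimately show False using pos[of x] by simp
qed



lemma half_two: "pconst (1/2) * (2 * X) = (X :: 'v rpoly)"
proof -
  have "(2 :: 'v rpoly) = pconst 2" by (simp add: pconst_def)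
  moreover have "pconst (1/2) * pconst 2 = (1 :: 'v rpoly)" by (simp flip: pconst_mult)
  ultimately show ?thesis by (metis mult.assoc mult_1)
qed

lemma preord_arch_from_vars:
  fixes T :: "'v::finite rpoly set"
  assumes T: "preord T" and vars: "\<And>i. \<exists>k. pconst k - pvar i \<in> T \<and> pconst k + pvar i \<in> T"
  shows "\<exists>k. pconst k - a \<in> T"
proof -
  define B where "B = {a. \<exists>k. pconst k - a \<in> T \<and> pconst k + a \<in> T}"
  have Bc: "pconst c \<in> B" for c
  proof -
    have "pconst \<bar>c\<bar> - pconst c \<in> T" "pconst \<bar>c\<bar> + pconst c \<in> T"
      using T by (simp_all add: preord_pconst flip: pconst_diff pconst_add)
    then show ?thesis unfolding B_def by blast
  qed
  have Badd: "a + b \<in> B" if ab: "a \<in> B" "b \<in> B" for a b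
  proof -
    obtain k k' where k: "pconst k - a \<in> T" "pconst k + a \<in> T" "pconst k' - b \<in> T" "pconst k' + b \<in> T"
      using ab unfolding B_def by blast
    have "pconst (k + k') - (a + b) = (pconst k - a) + (pconst k' - b)"
      "pconst (k + k') + (a + b) = (pconst k + a) + (pconst k' + b)"
      by (simp_all add: pconst_add algebra_simps)
    then show ?thesis unfolding B_def using k T by (metis (mono_tags, lifting) mem_Collect_eq preord_add)
  qed
  have Bmult: "a * b \<in> B" if ab: "a \<in> B" "b \<in> B" for a b
  proof -
    obtain k k' where k: "pconst k - a \<in> T" "pconst k + a \<in> T" "pconst k' - b \<in> T" "pconst k' + b \<in> T"
      using ab unfolding B_def by blast
    have e1: "(pconst k - a) * (pconst k' + b) + (pconst k + a) * (pconst k' - b) = 2 * (pconst k * pconst k' - a * b)"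
      by (simp add: algebra_simps)
    have e2: "(pconst k + a) * (pconst k' + b) + (pconst k - a) * (pconst k' - b) = 2 * (pconst k * pconst k' + a * b)"
      by (simp add: algebra_simps)
    have "(pconst k - a) * (pconst k' + b) + (pconst k + a) * (pconst k' - b) \<in> T"
      "(pconst k + a) * (pconst k' + b) + (pconst k - a) * (pconst k' - b) \<in> T"
      using k T by (auto intro!: preord_add preord_mult)
    then have "pconst (1/2) * ((pconst k - a) * (pconst k' + b) + (pconst k + a) * (pconst k' - b)) \<in> T"
      "pconst (1/2) * ((pconst k + a) * (pconst k' + b) + (pconst k - a) * (pconst k' - b)) \<in> T"
      using T by (auto intro!: preord_scale)
    then have "pconst (k * k') - a * b \<in> T" "pconst (k * k') + a * b \<in> T"
      unfolding e1 e2 half_two by (simp_all add: pconst_mult)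
    then show ?thesis unfolding B_def by blast
  qed
  have Bpow: "a ^ n \<in> B" if "a \<in> B" for a n
    using that by (induction n) (auto intro: Bmult Bc[of 1, simplified])
  have Bprod: "prod f S \<in> B" if "\<And>i. i \<in> S \<Longrightarrow> f i \<in> B" for f :: "'v \<Rightarrow> _" and S
    using that by (induction S rule: infinite_finite_induct) (auto intro: Bmult Bc[of 1, simplified])
  have Bsum: "sum f S \<in> B" if "\<And>i. i \<in> S \<Longrightarrow> f i \<in> B" for f :: "('v \<Rightarrow>\<^sub>0 nat) \<Rightarrow> _" and S
    using that by (induction S rule: infinite_finite_induct) (auto intro: Badd Bc[of 0, simplified])
  have Bvar: "pvar i \<in> B" for i using vars[of i] unfolding B_def by blast
  have "a \<in> B"
  proof -
    have "a = (\<Sum>\<alpha>\<in>Poly_Mapping.keys a. pconst (Poly_Mapping.lookup a \<alpha>) * pmono \<alpha>)"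
      using pm_sum_single[of a] by (simp add: single_mono)
    also have "\<dots> \<in> B"
      by (intro Bsum Bmult Bc) (unfold pmono_def, intro Bprod Bpow Bvar)
    finally show ?thesis .
  qed
  then show ?thesis unfolding B_def by blast
qed

lemma arch_weaken: "preord T \<Longrightarrow> pconst k0 - a \<in> T \<Longrightarrow> k0 \<le> k \<Longrightarrow> pconst k - a \<in> T"
proof -
  assume T: "preord T" "pconst k0 - a \<in> T" "k0 \<le> k"
  then have "(pconst k0 - a) + pconst (k - k0) \<in> T" by (intro preord_add preord_pconst) auto
  moreover have "(pconst k0 - a) + pconst (k - k0) = pconst k - a" by (simp add: pconst_diff algebra_simps)
  ultimately show ?thesis by simp
qed

lemma kd_step:
  fixes T :: "'v::finite rpoly set"
  assumes T: "preord T" and archT: "\<And>a. \<exists>k. pconst k - a \<in> T"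
    and tt: "t \<in> T" "t' \<in> T" "G * t = 1 + t'" and d: "\<delta> > 0"
  shows "G + pconst \<delta> \<in> T"
proof -
  obtain k0 where k0: "pconst k0 - t \<in> T" using archT by blast
  define k where "k = max k0 1"
  have k: "pconst k - t \<in> T" "k \<ge> 1" using arch_weaken[OF T k0] by (auto simp: k_def)
  obtain K0 where K0: "pconst K0 - G \<in> T" using archT by blast
  define K where "K = max K0 1"
  have K: "pconst K - G \<in> T" "K \<ge> 1" using arch_weaken[OF T K0] by (auto simp: K_def)
  obtain c00 where c00: "pconst c00 - (- G) \<in> T" using archT by blast
  define c0 where "c0 = max c00 0"
  have c0: "G + pconst c0 \<in> T" "c0 \<ge> 0" using arch_weaken[OF T c00, of c0] by (auto simp: c0_def add.commute)
  have tK: "t - pconst (1/K) \<in> T"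
  proof -
    have "(pconst K - G) * t + t' \<in> T" using K tt T by (intro preord_add preord_mult)
    then have "pconst (1/K) * ((pconst K - G) * t + t') \<in> T" using T K by (intro preord_scale) auto
    moreover have "(pconst K - G) * t + t' = pconst K * t - 1" using tt(3) by (simp add: algebra_simps)
    moreover have "pconst (1/K) * (pconst K * t - 1) = t - pconst (1/K)"
    proof -
      have "pconst (1/K) * pconst K = (1 :: 'v rpoly)" using K by (simp flip: pconst_mult)
      then show ?thesis by (simp add: algebra_simps)
    qed
    ultimately show ?thesis by simp
  qed
  define q where "q = 1 - 1 / (k * K)"
  have kK: "k * K \<ge> 1" using k K mult_mono[of 1 k 1 K] by simp
  have q: "0 \<le> q" "q < 1" using kK by (auto simp: q_def field_simps)
  have step: "G + pconst (c * q) \<in> T" if c: "c \<ge> 0" "G + pconst c \<in> T" for c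
  proof -
    define E where "E = 1 + t' + (pconst k - t) * (G + pconst c) + pconst c * (t - pconst (1/K))"
    have A: "(pconst k - t) * (G + pconst c) \<in> T" using preord_mult[OF T k(1) c(2)] .
    have B: "pconst c * (t - pconst (1/K)) \<in> T" using preord_scale[OF T c(1) tK] .
    have C: "1 + t' \<in> T" using preord_add[OF T preord_1[OF T] tt(2)] .
    have "E \<in> T" unfolding E_def using preord_add[OF T preord_add[OF T C A] B] .
    have "E = pconst k * G + (pconst k * pconst c - pconst c * pconst (1/K)) + (1 + t' - G * t)"
      unfolding E_def by (simp add: algebra_simps)
    also have "\<dots> = pconst k * G + pconst (k * c - c / K)"
      using tt(3) by (simp flip: pconst_mult pconst_diff)
    finally have E: "E = pconst k * G + pconst (k * c - c / K)" .
    have "pconst (1/k) * E \<in> T" using \<open>E \<in> T\<close> T k by (intro preord_scale) auto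
    moreover have "pconst (1/k) * E = G + pconst (c * q)"
    proof -
      have "pconst (1/k) * pconst k = (1 :: 'v rpoly)" using k by (simp flip: pconst_mult)
      then have "pconst (1/k) * E = G + pconst (1/k) * pconst (k * c - c / K)"
        unfolding E by (simp add: distrib_left) (metis mult.assoc mult_1)
      also have "\<dots> = G + pconst (c * q)"
        using k K by (simp flip: pconst_mult add: q_def field_simps)
      finally show ?thesis .
    qed
    ultimately show ?thesis by simp
  qed
  have iter: "G + pconst (c0 * q ^ n) \<in> T" for n
  proof (induction n)
    case 0 then show ?case using c0 by simp
  next
    case (Suc n)
    have "G + pconst (c0 * q ^ n * q) \<in> T" using step[OF _ Suc] c0 q by simp
    then show ?case by (simp add: mult_ac)
  qed
  show ?thesis
  proof (cases "c0 = 0")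
    case True
    have "(G + pconst 0) + pconst \<delta> \<in> T" using iter[of 0] True T d by (intro preord_add preord_pconst) auto
    then show ?thesis by simp
  next
    case False
    then have "c0 > 0" using c0 by simp
    obtain n where n: "q ^ n < \<delta> / c0" using real_arch_pow_inv[of "\<delta> / c0" q] q d \<open>c0 > 0\<close> by auto
    have "(G + pconst (c0 * q ^ n)) + pconst (\<delta> - c0 * q ^ n) \<in> T"
      using n \<open>c0 > 0\<close> by (intro preord_add[OF T iter[of n]] preord_pconst[OF T]) (auto simp: field_simps)
    moreover have "(G + pconst (c0 * q ^ n)) + pconst (\<delta> - c0 * q ^ n) = G + pconst \<delta>"
      by (simp add: pconst_diff)
    ultimately show ?thesis by simp
  qed
qed



definition ballpoly :: "real \<Rightarrow> 'v::finite rpoly" where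
  "ballpoly N = pconst N - (\<Sum>i\<in>UNIV. pvar i * pvar i)"

definition Tb :: "'v rpoly \<Rightarrow> 'v rpoly set" where
  "Tb h = {p. \<exists>a b. is_sos a \<and> is_sos b \<and> p = a + b * h}"

lemma Tb_preord: fixes h :: "'v rpoly" shows "preord (Tb h)"
  unfolding preord_def
proof (intro conjI ballI allI)
  fix x y assume "x \<in> Tb h" "y \<in> Tb h"
  then obtain a b c d where x: "x = a + b * h" and y: "y = c + d * h" and s: "is_sos a" "is_sos b" "is_sos c" "is_sos d"
    unfolding Tb_def by blast
  have "x + y = (a + c) + (b + d) * h" unfolding x y by (simp add: algebra_simps)
  then show "x + y \<in> Tb h" unfolding Tb_def using s by (blast intro: is_sos_add)
  have "x * y = (a * c + (b * d) * (h * h)) + (a * d + b * c) * h" unfolding x y by (simp add: algebra_simps)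
  moreover have "is_sos (a * c + (b * d) * (h * h))" "is_sos (a * d + b * c)"
    using s is_sos_sq[of h] by (auto intro!: is_sos_add intro: is_sos_mult)
  ultimately show "x * y \<in> Tb h" unfolding Tb_def by blast
next
  fix q :: "'v rpoly"
  have "q * q = q * q + 0 * h" by simp
  then show "q * q \<in> Tb h" unfolding Tb_def by (blast intro: is_sos_sq is_sos_0)
qed

lemma h_in_Tb: "h \<in> Tb h"
proof -
  have "h = 0 + 1 * h" by simp
  then show ?thesis unfolding Tb_def by (blast intro: is_sos_0 is_sos_1)
qed

lemma Tb_vars:
  fixes i :: "'v::finite"
  shows "\<exists>k. pconst k - pvar i \<in> Tb (ballpoly N) \<and> pconst k + pvar i \<in> Tb (ballpoly N)"
proof -
  let ?R = "(\<Sum>j\<in>UNIV - {i}. pvar j * pvar j) :: 'v rpoly"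
  have split: "(\<Sum>j\<in>UNIV. pvar j * pvar j) = pvar i * pvar i + ?R"
    by (simp add: sum.remove[of UNIV i])
  have two: "(2 :: 'v rpoly) = pconst 2" by (simp add: pconst_def)
  have two': "pconst 2 * pconst ((N + 1) / 2) = pconst N + (1 :: 'v rpoly)"
  proof -
    have "pconst 2 * pconst ((N + 1) / 2) = (pconst (2 * ((N + 1) / 2)) :: 'v rpoly)" by (metis pconst_mult)
    also have "\<dots> = pconst (N + 1)" by (rule arg_cong[where f=pconst]) simp
    finally show ?thesis by (simp add: pconst_add)
  qed
  have key: "pconst ((N+1)/2) + s * pvar i = pconst (1/2) * (?R + (pvar i + s) * (pvar i + s)) + pconst (1/2) * ballpoly N"
    if s: "s = 1 \<or> s = -1" for s :: "'v rpoly"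
  proof -
    have ss: "s * s = 1" using s by auto
    have "?R + (pvar i + s) * (pvar i + s) + ballpoly N = 2 * (pconst ((N+1)/2) + s * pvar i)"
      unfolding ballpoly_def split two distrib_left two' using ss by (simp add: algebra_simps two[symmetric])
    then have "pconst (1/2) * (?R + (pvar i + s) * (pvar i + s) + ballpoly N) = pconst ((N+1)/2) + s * pvar i"
      by (simp only: half_two)
    then show ?thesis by (simp add: distrib_left)
  qed
  have sosR: "is_sos (pconst (1/2) * (?R + (pvar i + s) * (pvar i + s)))" for s
    by (intro is_sos_scale is_sos_add is_sos_sum) auto
  have h2: "is_sos (pconst (1/2) :: 'v rpoly)" by (rule is_sos_pconst) simp
  have "pconst ((N+1)/2) + 1 * pvar i \<in> Tb (ballpoly N)" "pconst ((N+1)/2) + (-1) * pvar i \<in> Tb (ballpoly N)"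
    unfolding Tb_def using key sosR h2 by blast+
  then show ?thesis by auto
qed

lemma ball_putinar:
  fixes F :: "'v::finite rpoly"
  assumes d: "\<delta> > 0" and pos: "\<And>x. peval (ballpoly N) x \<ge> 0 \<Longrightarrow> peval F x > \<delta>"
  shows "\<exists>a b. is_sos a \<and> is_sos b \<and> F = a + b * ballpoly N"
proof -
  let ?T = "Tb (ballpoly N :: 'v rpoly)"
  have archT: "\<exists>k. pconst k - a \<in> ?T" for a
    by (rule preord_arch_from_vars[OF Tb_preord Tb_vars])
  have "\<exists>t\<in>?T. \<exists>t'\<in>?T. (F - pconst \<delta>) * t = 1 + t'"
    by (rule weak_pss[OF Tb_preord archT h_in_Tb]) (use pos in \<open>auto simp: peval_diff\<close>)
  then obtain t t' where tt: "t \<in> ?T" "t' \<in> ?T" "(F - pconst \<delta>) * t = 1 + t'" by blast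
  have "(F - pconst \<delta>) + pconst \<delta> \<in> ?T" by (rule kd_step[OF Tb_preord archT tt d])
  then show ?thesis unfolding Tb_def by simp
qed



section \<open>Compactness facts\<close>

definition Ev :: "'v::finite rpoly \<Rightarrow> real^'v \<Rightarrow> real" where
  "Ev p v = peval p (\<lambda>i. v $ i)"

lemma Ev_cont: "continuous_on S (Ev p)"
  unfolding Ev_def peval_def meval_def by (intro continuous_intros)

lemma Ev_chi: "Ev p (\<chi> i. x i) = peval p x"
  by (simp add: Ev_def)

lemma Ev_ball: "Ev (ballpoly N) v = N - (\<Sum>i\<in>UNIV. v $ i * v $ i)"
  by (simp add: Ev_def ballpoly_def peval_diff peval_sum peval_mult)

lemma ball_compact:
  assumes N: "N > 0"
  shows "compact {v :: real^'v::finite. Ev (ballpoly N) v \<ge> 0}" (is "compact ?B")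
    and "{v :: real^'v::finite. Ev (ballpoly N) v \<ge> 0} \<noteq> {}"
proof -
  have "closed ?B" using closed_Collect_le[OF continuous_on_const[of UNIV 0] Ev_cont[of UNIV "ballpoly N"]] by simp
  moreover have "bounded ?B"
    unfolding bounded_iff
  proof (intro exI ballI)
    fix v assume "v \<in> ?B"
    then have "(\<Sum>i\<in>UNIV. v $ i * v $ i) \<le> N" by (simp add: Ev_ball)
    then have "(norm v)\<^sup>2 \<le> N" by (simp add: dot_square_norm[symmetric] inner_vec_def)
    then show "norm v \<le> sqrt N" by (simp add: real_le_rsqrt)
  qed
  ultimately show "compact ?B" by (simp add: compact_eq_bounded_closed)
  have "(0 :: real^'v) \<in> ?B" using N by (simp add: Ev_ball)
  then show "?B \<noteq> {}" by blast
qed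

lemma bounded_on_ball:
  assumes N: "N > 0"
  shows "\<exists>M\<ge>0. \<forall>x. peval (ballpoly N) x \<ge> 0 \<longrightarrow> \<bar>peval p (x::'v::finite \<Rightarrow> real)\<bar> \<le> M"
proof -
  let ?B = "{v :: real^'v. Ev (ballpoly N) v \<ge> 0}"
  have "continuous_on ?B (\<lambda>v. \<bar>Ev p v\<bar>)" by (intro continuous_intros Ev_cont)
  then obtain v0 where v0: "v0 \<in> ?B" "\<forall>v\<in>?B. \<bar>Ev p v\<bar> \<le> \<bar>Ev p v0\<bar>"
    using continuous_attains_sup[OF ball_compact[OF N]] by blast
  show ?thesis
  proof (intro exI[of _ "\<bar>Ev p v0\<bar>"] conjI allI impI)
    fix x :: "'v \<Rightarrow> real" assume "peval (ballpoly N) x \<ge> 0"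
    then have "(\<chi> i. x i) \<in> ?B" by (simp add: Ev_chi)
    then show "\<bar>peval p x\<bar> \<le> \<bar>Ev p v0\<bar>" using v0(2) by (metis Ev_chi)
  qed simp
qed

lemma compact_facts:
  fixes f :: "'v::finite rpoly" and g :: "nat \<Rightarrow> 'v rpoly"
  assumes N: "N > 0" and pos: "\<And>x. (\<forall>j\<in>{1..m}. peval (g j) x \<ge> 0) \<Longrightarrow> peval f x > 0"
  shows "\<exists>\<theta>>0. \<forall>x. peval (ballpoly N) x \<ge> 0 \<longrightarrow> (peval f x \<ge> \<theta> \<or> (\<exists>j\<in>{1..m}. peval (g j) x \<le> - \<theta>))"
proof -
  let ?B = "{v :: real^'v. Ev (ballpoly N) v \<ge> 0}"
  define \<psi> where "\<psi> v = max (Ev f v) (\<Sum>j\<in>{1..m}. max 0 (- Ev (g j) v))" for v :: "real^'v"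
  have "continuous_on ?B \<psi>" unfolding \<psi>_def by (intro continuous_intros Ev_cont)
  then obtain v0 where v0: "v0 \<in> ?B" "\<forall>v\<in>?B. \<psi> v0 \<le> \<psi> v"
    using continuous_attains_inf[OF ball_compact[OF N]] by blast
  define \<theta>0 where "\<theta>0 = \<psi> v0"
  have \<theta>0: "\<theta>0 > 0"
  proof (cases "\<forall>j\<in>{1..m}. Ev (g j) v0 \<ge> 0")
    case True
    have "Ev f v0 > 0" using pos[of "\<lambda>i. v0 $ i"] True by (simp add: Ev_def)
    then show ?thesis unfolding \<theta>0_def \<psi>_def by simp
  next
    case False
    then obtain j where j: "j \<in> {1..m}" "Ev (g j) v0 < 0" by auto
    have "max 0 (- Ev (g j) v0) \<le> (\<Sum>j\<in>{1..m}. max 0 (- Ev (g j) v0))"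
      by (rule member_le_sum) (use j in auto)
    then show ?thesis using j unfolding \<theta>0_def \<psi>_def by simp
  qed
  define \<theta> where "\<theta> = \<theta>0 / (m + 1)"
  have \<theta>: "\<theta> > 0" "\<theta> \<le> \<theta>0" using \<theta>0 by (auto simp: \<theta>_def field_simps)
  show ?thesis
  proof (intro exI[of _ \<theta>] conjI allI impI)
    show "\<theta> > 0" by (fact \<theta>(1))
    fix x :: "'v \<Rightarrow> real" assume x: "peval (ballpoly N) x \<ge> 0"
    define v :: "real^'v" where "v = (\<chi> i. x i)"
    have vB: "v \<in> ?B" using x by (simp add: v_def Ev_chi)
    have "\<psi> v \<ge> \<theta>0" using v0(2) vB unfolding \<theta>0_def by blast
    then consider "Ev f v \<ge> \<theta>0" | "(\<Sum>j\<in>{1..m}. max 0 (- Ev (g j) v)) \<ge> \<theta>0"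
      unfolding \<psi>_def by linarith
    then show "peval f x \<ge> \<theta> \<or> (\<exists>j\<in>{1..m}. peval (g j) x \<le> - \<theta>)"
    proof cases
      case 1 then show ?thesis using \<theta> by (simp add: v_def Ev_chi)
    next
      case 2
      have "\<exists>j\<in>{1..m}. max 0 (- Ev (g j) v) \<ge> \<theta>"
      proof (rule ccontr)
        assume H: "\<not> ?thesis"
        have le: "max 0 (- Ev (g j) v) \<le> \<theta>" if "j \<in> {1..m}" for j
        proof -
          from H have "\<forall>j\<in>{1..m}. \<not> \<theta> \<le> max 0 (- Ev (g j) v)" by blast
          with that have "\<not> \<theta> \<le> max 0 (- Ev (g j) v)" by blast
          then show ?thesis by linarith
        qed
        have "(\<Sum>j\<in>{1..m}. max 0 (- Ev (g j) v)) \<le> (\<Sum>j\<in>{1..m}. \<theta>)"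
          by (intro sum_mono le)
        also have "\<dots> = m * \<theta>" by simp
        also have "\<dots> < \<theta>0" using \<theta>0 by (simp add: \<theta>_def field_simps)
        finally show False using 2 by simp
      qed
      then obtain j where "j \<in> {1..m}" "max 0 (- Ev (g j) v) \<ge> \<theta>" by blast
      then have "j \<in> {1..m}" "peval (g j) x \<le> - \<theta>" using \<theta> by (auto simp: v_def Ev_chi)
      then show ?thesis by blast
    qed
  qed
qed



lemma w_le:
  fixes t :: real
  assumes t: "0 \<le> t" "t \<le> 1" and n: "n \<ge> 1"
  shows "(1 - t) ^ n * t \<le> 1 / n"
proof -
  have A: "(1 + n * t) * (1 - t) ^ n \<le> (1 + t) ^ n * (1 - t) ^ n"
    by (rule mult_right_mono[OF Bernoulli_inequality]) (use t in auto)
  have "(1 + t) ^ n * (1 - t) ^ n = (1 - t * t) ^ n" by (simp add: power_mult_distrib[symmetric] algebra_simps)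
  also have "\<dots> \<le> 1" by (rule power_le_one) (use t in \<open>auto simp: mult_le_one\<close>)
  finally have "(1 + n * t) * (1 - t) ^ n \<le> 1" using A by linarith
  then have "n * ((1 - t) ^ n * t) \<le> 1"
    using t by (simp add: algebra_simps) (smt (verit) zero_le_power)
  then show ?thesis using n by (simp add: field_simps mult.commute)
qed

lemma w_nonpos:
  fixes t :: real
  assumes "t \<le> 0" shows "(1 - t) ^ n * t \<le> 0"
  using assms by (simp add: mult_nonneg_nonpos)

lemma w_neg:
  fixes t d :: real
  assumes t: "t \<le> - d" and d: "d > 0"
  shows "(1 - t) ^ n * t \<le> - ((1 + d) ^ n * d)"
proof -
  have p: "(1 + d) ^ n \<le> (1 - t) ^ n" by (rule power_mono) (use t d in auto)
  have "(1 - t) ^ n * t \<le> (1 - t) ^ n * (- d)" by (rule mult_left_mono) (use t d in auto)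
  also have "\<dots> \<le> (1 + d) ^ n * (- d)" by (rule mult_right_mono_neg[OF p]) (use d in auto)
  finally show ?thesis by simp
qed

lemma w_le1:
  fixes t :: real
  assumes "t \<le> 1" "n \<ge> 1"
  shows "(1 - t) ^ n * t \<le> 1 / n"
proof (cases "t \<ge> 0")
  case True then show ?thesis using w_le assms by blast
next
  case False
  then have "(1 - t) ^ n * t \<le> 0" by (intro w_nonpos) simp
  also have "0 \<le> 1 / (n::real)" by simp
  finally show ?thesis .
qed

theorem putinar:
  fixes m :: nat and g :: "nat \<Rightarrow> 'v::finite rpoly" and f :: "'v rpoly"
  assumes arch: "archimedean m g"
    and pos: "\<And>x. (\<forall>j\<in>{1..m}. peval (g j) x \<ge> 0) \<Longrightarrow> peval f x > 0"
  shows "\<exists>\<sigma>. (\<forall>j\<le>m. is_sos (\<sigma> j)) \<and> f = \<sigma> 0 + (\<Sum>j=1..m. \<sigma> j * g j)"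
proof -
  obtain N \<tau> where N: "N > 0" and \<tau>: "\<forall>j\<le>m. is_sos (\<tau> j)" and hN: "ballpoly N = \<tau> 0 + (\<Sum>j=1..m. \<tau> j * g j)"
    using arch unfolding archimedean_def quad_module_def ballpoly_def by blast
  obtain \<theta> where \<theta>: "\<theta> > 0" and th: "\<And>x. peval (ballpoly N) x \<ge> 0 \<Longrightarrow> peval f x \<ge> \<theta> \<or> (\<exists>j\<in>{1..m}. peval (g j) x \<le> - \<theta>)"
    using compact_facts[OF N pos] by blast
  obtain Mf where Mf: "Mf \<ge> 0" "\<And>x. peval (ballpoly N) x \<ge> 0 \<Longrightarrow> \<bar>peval f x\<bar> \<le> Mf"
    using bounded_on_ball[OF N, of f] by blast
  have "\<forall>j. \<exists>M\<ge>0. \<forall>x. peval (ballpoly N) x \<ge> 0 \<longrightarrow> \<bar>peval (g j) (x::'v \<Rightarrow> real)\<bar> \<le> M"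
    using bounded_on_ball[OF N] by blast
  then obtain Mg where Mg: "\<And>j. Mg j \<ge> 0" "\<And>j x. peval (ballpoly N) x \<ge> 0 \<Longrightarrow> \<bar>peval (g j) x\<bar> \<le> Mg j"
    by metis
  define L where "L = 1 + Mf + (\<Sum>j\<in>{1..m}. Mg j)"
  have sMg: "(\<Sum>j\<in>{1..m}. Mg j) \<ge> 0" by (intro sum_nonneg Mg(1))
  have L1: "L \<ge> 1" using Mf sMg by (simp add: L_def)
  have Lf: "\<bar>peval f x\<bar> \<le> L" if "peval (ballpoly N) x \<ge> 0" for x
    using Mf(2)[OF that] sMg by (simp add: L_def)
  have Lg: "\<bar>peval (g j) x\<bar> \<le> L" if "peval (ballpoly N) x \<ge> 0" "j \<in> {1..m}" for x j
  proof -
    have "Mg j \<le> (\<Sum>j\<in>{1..m}. Mg j)" by (rule member_le_sum) (use that Mg(1) in auto)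
    then show ?thesis using Mg(2)[OF that(1), of j] Mf(1) by (simp add: L_def)
  qed
  define c where "c = 1 / L"
  define d where "d = \<theta> / L"
  have c: "c > 0" and d: "d > 0" using L1 \<theta> by (auto simp: c_def d_def)
  define k :: nat where "k = nat \<lceil>m / \<theta> + (m + L) / d\<^sup>2\<rceil> + 1"
  have k1: "k \<ge> 1" by (simp add: k_def)
  have kc: "m / \<theta> + (m + L) / d\<^sup>2 \<le> real (nat \<lceil>m / \<theta> + (m + L) / d\<^sup>2\<rceil>)"
    by (rule real_nat_ceiling_ge)
  have nn1: "m / \<theta> \<ge> 0" "(m + L) / d\<^sup>2 \<ge> 0" using \<theta> L1 by auto
  have km: "m \<le> k * \<theta>"
  proof -
    have "m / \<theta> \<le> k" unfolding k_def of_nat_add of_nat_1 using kc nn1 by linarith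
    then show ?thesis using \<theta> by (simp add: field_simps)
  qed
  have kd: "m + L \<le> (1 + d) ^ (2*k) * d"
  proof -
    have "(m + L) / d\<^sup>2 \<le> k" unfolding k_def of_nat_add of_nat_1 using kc nn1 by linarith
    then have "m + L \<le> k * d\<^sup>2" using d by (simp add: field_simps)
    also have "\<dots> \<le> (1 + 2 * k * d) * d" using d by (simp add: power2_eq_square algebra_simps)
    also have "\<dots> \<le> (1 + d) ^ (2*k) * d"
      by (rule mult_right_mono) (use Bernoulli_inequality[of d "2*k"] d in auto)
    finally show ?thesis .
  qed
  define trm where "trm j = pconst c * (1 - pconst c * g j) ^ (2*k) * g j" for j
  have eval_term: "peval (trm j) x = (1 - c * peval (g j) x) ^ (2*k) * (c * peval (g j) x)" for j x
    by (simp add: trm_def peval_mult peval_power peval_diff)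
  define F where "F = f - (\<Sum>j=1..m. trm j)"
  define \<delta> where "\<delta> = min (\<theta> / 2) 1 / 2"
  have \<delta>: "\<delta> > 0" using \<theta> by (simp add: \<delta>_def)
  have Fpos: "peval F x > \<delta>" if xB: "peval (ballpoly N) x \<ge> 0" for x
  proof -
    have evF: "peval F x = peval f x - (\<Sum>j=1..m. peval (trm j) x)"
      by (simp add: F_def peval_diff peval_sum)
    have a1: "c * peval (g j) x \<le> 1" if "j \<in> {1..m}" for j
      using Lg[OF xB that] L1 by (simp add: c_def field_simps abs_le_iff)
    have tle: "peval (trm j) x \<le> 1 / (2*k)" if "j \<in> {1..m}" for j
      unfolding eval_term using w_le1[OF a1[OF that], of "2*k"] k1 by simp
    from th[OF xB] show ?thesis
    proof
      assume fth: "peval f x \<ge> \<theta>"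
      have "(\<Sum>j=1..m. peval (trm j) x) \<le> (\<Sum>j=1..m. 1 / (2*k))" by (intro sum_mono tle)
      also have "\<dots> = m / (2 * k)" by simp
      also have "\<dots> \<le> \<theta> / 2" using km k1 by (simp add: field_simps)
      finally have "peval F x \<ge> \<theta> / 2" using fth evF by simp
      then show ?thesis using \<theta> by (simp add: \<delta>_def)
    next
      assume "\<exists>j\<in>{1..m}. peval (g j) x \<le> - \<theta>"
      then obtain j0 where j0: "j0 \<in> {1..m}" "peval (g j0) x \<le> - \<theta>" by blast
      have "c * peval (g j0) x \<le> - d"
      proof -
        have "peval (g j0) x / L \<le> (- \<theta>) / L" using j0(2) L1 by (intro divide_right_mono) auto
        then show ?thesis by (simp add: c_def d_def)
      qed
      then have t0: "peval (trm j0) x \<le> - ((1 + d) ^ (2*k) * d)"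
        unfolding eval_term by (rule w_neg[OF _ d])
      have "(\<Sum>j=1..m. peval (trm j) x) = peval (trm j0) x + (\<Sum>j\<in>{1..m} - {j0}. peval (trm j) x)"
        using j0(1) by (simp add: sum.remove)
      also have "(\<Sum>j\<in>{1..m} - {j0}. peval (trm j) x) \<le> (\<Sum>j\<in>{1..m} - {j0}. 1)"
      proof (intro sum_mono)
        fix j assume "j \<in> {1..m} - {j0}"
        then have "peval (trm j) x \<le> 1 / (2*k)" using tle by blast
        also have "\<dots> \<le> 1" using k1 by simp
        finally show "peval (trm j) x \<le> 1" .
      qed
      also have "(\<Sum>j\<in>{1..m} - {j0}. (1::real)) = m - 1" using j0(1) by simp
      finally have "(\<Sum>j=1..m. peval (trm j) x) \<le> - ((1 + d) ^ (2*k) * d) + (m - 1)" using t0 by simp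
      then have "peval F x \<ge> 1" using evF Lf[OF xB] kd j0(1) by (simp add: abs_le_iff)
      then show ?thesis by (simp add: \<delta>_def)
    qed
  qed
  obtain a b where ab: "is_sos a" "is_sos b" "F = a + b * ballpoly N"
    using ball_putinar[OF \<delta> Fpos] by blast
  define \<sigma> where "\<sigma> j = (if j = 0 then a + b * \<tau> 0 else b * \<tau> j + pconst c * (1 - pconst c * g j) ^ (2*k))" for j
  have "\<forall>j\<le>m. is_sos (\<sigma> j)"
  proof (intro allI impI)
    fix j assume "j \<le> m"
    then show "is_sos (\<sigma> j)" unfolding \<sigma>_def using ab \<tau> c
      by (auto intro!: is_sos_add is_sos_mult is_sos_scale is_sos_power2)
  qed
  moreover have "f = \<sigma> 0 + (\<Sum>j=1..m. \<sigma> j * g j)"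
  proof -
    have "f = F + (\<Sum>j=1..m. trm j)" by (simp add: F_def)
    also have "\<dots> = a + b * \<tau> 0 + (\<Sum>j=1..m. (b * \<tau> j) * g j) + (\<Sum>j=1..m. trm j)"
      unfolding ab(3) hN by (simp add: distrib_left sum_distrib_left mult.assoc)
    also have "\<dots> = \<sigma> 0 + (\<Sum>j=1..m. \<sigma> j * g j)"
      by (simp add: \<sigma>_def trm_def algebra_simps sum.distrib)
    finally show ?thesis .
  qed
  ultimately show ?thesis by blast
qed



section \<open>Sign symmetries\<close>

definition chi :: "('v \<Rightarrow> nat) \<Rightarrow> ('v::finite \<Rightarrow>\<^sub>0 nat) \<Rightarrow> real" where
  "chi s \<alpha> = (if even (\<Sum>i\<in>UNIV. s i * Poly_Mapping.lookup \<alpha> i) then 1 else -1)"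

definition sflip :: "('v \<Rightarrow> nat) \<Rightarrow> 'v::finite rpoly \<Rightarrow> 'v rpoly" where
  "sflip s p = Poly_Mapping.mapp (\<lambda>\<alpha> c. chi s \<alpha> * c) p"

lemma lookup_flip: "Poly_Mapping.lookup (sflip s p) \<alpha> = chi s \<alpha> * Poly_Mapping.lookup p \<alpha>"
  by (simp add: sflip_def lookup_mapp when_def in_keys_iff)

lemma chi_add: "chi s (\<alpha> + \<beta>) = chi s \<alpha> * chi s \<beta>"
proof -
  have "(\<Sum>i\<in>UNIV. s i * Poly_Mapping.lookup (\<alpha> + \<beta>) i) = (\<Sum>i\<in>UNIV. s i * Poly_Mapping.lookup \<alpha> i) + (\<Sum>i\<in>UNIV. s i * Poly_Mapping.lookup \<beta> i)"
    by (simp add: lookup_add algebra_simps sum.distrib)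
  then show ?thesis by (simp add: chi_def)
qed

lemma chi_sq: "chi s \<alpha> * chi s \<alpha> = 1" by (simp add: chi_def)

lemma flip_add: "sflip s (p + q) = sflip s p + sflip s q"
  by (rule poly_mapping_eqI) (simp add: lookup_flip lookup_add algebra_simps)

lemma flip_zero: "sflip s 0 = 0"
  by (rule poly_mapping_eqI) (simp add: lookup_flip)

lemma flip_single: "sflip s (Poly_Mapping.single a x) = Poly_Mapping.single a (chi s a * x)"
  by (rule poly_mapping_eqI) (simp add: lookup_flip lookup_single when_def)

lemma flip_mult: "sflip s (p * q) = sflip s p * sflip s q"
  by (rule additive_mult_hom[where \<Phi>="sflip s"]) (simp_all add: flip_add flip_zero flip_single mult_single chi_add mult_ac)

lemma flip_sum: "sflip s (sum f S) = (\<Sum>i\<in>S. sflip s (f i))"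
  by (induction S rule: infinite_finite_induct) (simp_all add: flip_zero flip_add)

lemma flip_sos: "is_sos p \<Longrightarrow> is_sos (sflip s p)"
  by (rule is_sos_hom[where \<Phi>="sflip s"]) (simp_all add: flip_add flip_zero flip_mult)

lemma flip_id: "(\<And>\<alpha>. \<alpha> \<in> supp p \<Longrightarrow> even (\<Sum>i\<in>UNIV. s i * Poly_Mapping.lookup \<alpha> i)) \<Longrightarrow> sflip s p = p"
  by (rule poly_mapping_eqI) (auto simp: lookup_flip chi_def supp_def in_keys_iff)

definition sxor :: "('v \<Rightarrow> nat) \<Rightarrow> ('v \<Rightarrow> nat) \<Rightarrow> ('v \<Rightarrow> nat)" where
  "sxor t s = (\<lambda>i. (s i + t i) mod 2)"

lemma even_sum_cong:
  fixes f g :: "'a \<Rightarrow> nat"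
  assumes "\<And>i. f i mod 2 = g i mod 2"
  shows "even (sum f S) \<longleftrightarrow> even (sum g S)"
proof -
  have "sum f S mod 2 = (\<Sum>i\<in>S. f i mod 2) mod 2" by (rule mod_sum_eq[symmetric])
  also have "\<dots> = (\<Sum>i\<in>S. g i mod 2) mod 2" using assms by simp
  also have "\<dots> = sum g S mod 2" by (rule mod_sum_eq)
  finally show ?thesis by (simp add: even_iff_mod_2_eq_zero)
qed

lemma sxor_parity:
  "even (\<Sum>i\<in>UNIV. sxor t s i * a i) \<longleftrightarrow> even ((\<Sum>i\<in>UNIV. s i * a i) + (\<Sum>i\<in>UNIV. t i * a i))"
proof -
  have "even (\<Sum>i\<in>UNIV. sxor t s i * a i) \<longleftrightarrow> even (\<Sum>i\<in>UNIV. s i * a i + t i * a i)"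
  proof (rule even_sum_cong)
    fix i
    have "(sxor t s i * a i) mod 2 = ((s i + t i) * a i) mod 2" unfolding sxor_def by (rule mod_mult_left_eq)
    then show "(sxor t s i * a i) mod 2 = (s i * a i + t i * a i) mod 2" by (simp add: distrib_right)
  qed
  then show ?thesis by (simp add: sum.distrib)
qed

lemma chi_sxor: "chi (sxor t s) \<alpha> = chi s \<alpha> * chi t \<alpha>"
  using sxor_parity[of t s "Poly_Mapping.lookup \<alpha>"] by (simp add: chi_def)

lemma sign_sym_sxor:
  assumes "s \<in> sign_symmetries A" "t \<in> sign_symmetries A"
  shows "sxor t s \<in> sign_symmetries A"
proof -
  have "sxor t s i \<in> {0,1}" for i
  proof -
    have "(s i + t i) mod 2 = 0 \<or> (s i + t i) mod 2 = 1" by presburger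
    then show ?thesis by (auto simp: sxor_def)
  qed
  moreover have "even (\<Sum>i\<in>UNIV. sxor t s i * Poly_Mapping.lookup \<alpha> i)" if "\<alpha> \<in> A" for \<alpha>
    using assms that unfolding sign_symmetries_def sxor_parity by auto
  ultimately show ?thesis unfolding sign_symmetries_def by blast
qed

lemma sxor_invol:
  assumes "\<forall>i. s i \<in> {0,1}" "\<forall>i. t i \<in> {0,1}"
  shows "sxor t (sxor t s) = s"
proof
  fix i
  show "sxor t (sxor t s) i = s i" using assms[THEN spec[of _ i]] by (auto simp: sxor_def)
qed

lemma sign_sym_finite: "finite (sign_symmetries (A :: ('v::finite \<Rightarrow>\<^sub>0 nat) set))"
proof -
  have "sign_symmetries A \<subseteq> {f. \<forall>x. (x \<in> (UNIV::'v set) \<longrightarrow> f x \<in> {0,1}) \<and> (x \<notin> UNIV \<longrightarrow> f x = 0)}"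
    unfolding sign_symmetries_def by auto
  moreover have "finite {f. \<forall>x. (x \<in> (UNIV::'v set) \<longrightarrow> f x \<in> {0::nat,1}) \<and> (x \<notin> UNIV \<longrightarrow> f x = 0)}"
    by (rule finite_set_of_finite_funs) auto
  ultimately show ?thesis by (rule finite_subset)
qed

lemma sign_sym_zero: "(\<lambda>_. 0) \<in> sign_symmetries A"
  unfolding sign_symmetries_def by simp

lemma char_sum_zero:
  assumes t: "t \<in> sign_symmetries A" and odd: "odd (\<Sum>i\<in>UNIV. t i * Poly_Mapping.lookup \<alpha> i)"
  shows "(\<Sum>s\<in>sign_symmetries A. chi s \<alpha>) = 0"
proof -
  let ?R = "sign_symmetries A"
  have bij: "bij_betw (sxor t) ?R ?R"
  proof (rule bij_betwI[where g="sxor t"])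
    show "sxor t \<in> ?R \<rightarrow> ?R" using sign_sym_sxor t by blast
    show "sxor t \<in> ?R \<rightarrow> ?R" using sign_sym_sxor t by blast
    fix s assume "s \<in> ?R"
    then have "\<forall>i. s i \<in> {0,1}" "\<forall>i. t i \<in> {0,1}" using t unfolding sign_symmetries_def by blast+
    then show "sxor t (sxor t s) = s" "sxor t (sxor t s) = s" by (simp_all add: sxor_invol)
  qed
  have ct: "chi t \<alpha> = -1" using odd by (simp add: chi_def)
  have "(\<Sum>s\<in>?R. chi s \<alpha>) = (\<Sum>s\<in>?R. chi (sxor t s) \<alpha>)"
    by (rule sum.reindex_bij_betw[OF bij, symmetric])
  also have "\<dots> = - (\<Sum>s\<in>?R. chi s \<alpha>)" by (simp add: chi_sxor ct sum_negf)
  finally show ?thesis by simp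
qed



theorem theorem7p6:
  fixes m :: nat and g :: "nat \<Rightarrow> 'v::finite rpoly" and f :: "'v rpoly"
    and R :: "('v \<Rightarrow> nat) set"
  assumes arch: "archimedean m g"
    and pos: "\<And>x. (\<forall>j\<in>{1..m}. peval (g j) x \<ge> 0) \<Longrightarrow> peval f x > 0"
    and R: "R = sign_symmetries (supp f \<union> (\<Union>j\<in>{1..m}. supp (g j)))"
  shows "\<exists>\<sigma> :: nat \<Rightarrow> 'v rpoly.
           (\<forall>j\<le>m. is_sos (\<sigma> j)) \<and>
           f = \<sigma> 0 + (\<Sum>j=1..m. \<sigma> j * g j) \<and>
           (\<forall>j\<le>m. \<forall>\<alpha>\<in>supp (\<sigma> j). \<forall>s\<in>R. even (\<Sum>i\<in>UNIV. s i * Poly_Mapping.lookup \<alpha> i))"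
proof -
  obtain \<sigma> where \<sigma>: "\<forall>j\<le>m. is_sos (\<sigma> j)" and f: "f = \<sigma> 0 + (\<Sum>j=1..m. \<sigma> j * g j)"
    using putinar[OF arch pos] by blast
  define A where "A = supp f \<union> (\<Union>j\<in>{1..m}. supp (g j))"
  have RA: "R = sign_symmetries A" using R by (simp add: A_def)
  have finR: "finite R" using RA sign_sym_finite by simp
  have neR: "R \<noteq> {}" using RA sign_sym_zero by blast
  define n where "n = card R"
  have n: "n > 0" using finR neR by (simp add: n_def card_gt_0_iff)
  define \<sigma>' where "\<sigma>' j = pconst (1 / n) * (\<Sum>s\<in>R. sflip s (\<sigma> j))" for j
  have sym_ev: "even (\<Sum>i\<in>UNIV. s i * Poly_Mapping.lookup \<alpha> i)" if "s \<in> R" "\<alpha> \<in> A" for s \<alpha>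
    using that unfolding RA sign_symmetries_def by blast
  have flip_f: "sflip s f = f" if "s \<in> R" for s
    by (rule flip_id) (use sym_ev[OF that] in \<open>auto simp: A_def\<close>)
  have flip_g: "sflip s (g j) = g j" if "s \<in> R" "j \<in> {1..m}" for s j
  proof (rule flip_id)
    fix \<alpha> assume "\<alpha> \<in> supp (g j)"
    then have "\<alpha> \<in> A" using that(2) by (auto simp: A_def)
    then show "even (\<Sum>i\<in>UNIV. s i * Poly_Mapping.lookup \<alpha> i)" by (rule sym_ev[OF that(1)])
  qed
  have sos': "\<forall>j\<le>m. is_sos (\<sigma>' j)"
    unfolding \<sigma>'_def using \<sigma> by (auto intro!: is_sos_scale is_sos_sum flip_sos)
  have avg: "f = pconst (1 / n) * (\<Sum>s\<in>R. sflip s f)"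
  proof -
    have "(\<Sum>s\<in>R. sflip s f) = (\<Sum>s\<in>R. f)" by (rule sum.cong) (simp_all add: flip_f)
    also have "\<dots> = of_nat n * f" by (simp add: n_def)
    also have "(of_nat n :: 'v rpoly) = pconst (real n)" by (simp add: pconst_def)
    finally have "pconst (1 / n) * (\<Sum>s\<in>R. sflip s f) = (pconst (1 / n) * pconst (real n)) * f"
      by (simp add: mult.assoc)
    also have "pconst (1 / n) * pconst (real n) = (1 :: 'v rpoly)" using n by (simp flip: pconst_mult)
    finally show ?thesis by simp
  qed
  have eq': "f = \<sigma>' 0 + (\<Sum>j=1..m. \<sigma>' j * g j)"
  proof -
    have fs: "sflip s f = sflip s (\<sigma> 0) + (\<Sum>j=1..m. sflip s (\<sigma> j) * g j)" if "s \<in> R" for s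
    proof -
      have "sflip s f = sflip s (\<sigma> 0) + (\<Sum>j=1..m. sflip s (\<sigma> j) * sflip s (g j))"
        by (subst f) (simp add: flip_add flip_sum flip_mult)
      also have "\<dots> = sflip s (\<sigma> 0) + (\<Sum>j=1..m. sflip s (\<sigma> j) * g j)"
        using flip_g[OF that] by simp
      finally show ?thesis .
    qed
    have "f = pconst (1 / n) * (\<Sum>s\<in>R. sflip s (\<sigma> 0) + (\<Sum>j=1..m. sflip s (\<sigma> j) * g j))"
      using avg fs by (metis (no_types, lifting) sum.cong)
    also have "\<dots> = pconst (1 / n) * (\<Sum>s\<in>R. sflip s (\<sigma> 0)) + (\<Sum>j=1..m. (pconst (1 / n) * (\<Sum>s\<in>R. sflip s (\<sigma> j))) * g j)"
      by (simp add: sum.distrib distrib_left sum_distrib_left sum_distrib_right mult.assoc sum.swap[of _ R])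
    finally show ?thesis unfolding \<sigma>'_def .
  qed
  have supp': "even (\<Sum>i\<in>UNIV. s i * Poly_Mapping.lookup \<alpha> i)" if "\<alpha> \<in> supp (\<sigma>' j)" "s \<in> R" for j \<alpha> s
  proof (rule ccontr)
    assume odd: "odd (\<Sum>i\<in>UNIV. s i * Poly_Mapping.lookup \<alpha> i)"
    have "Poly_Mapping.lookup (\<sigma>' j) \<alpha> = (1 / n) * (\<Sum>t\<in>R. chi t \<alpha> * Poly_Mapping.lookup (\<sigma> j) \<alpha>)"
      unfolding \<sigma>'_def lookup_pconst_mult lookup_sum lookup_flip ..
    also have "(\<Sum>t\<in>R. chi t \<alpha> * Poly_Mapping.lookup (\<sigma> j) \<alpha>) = (\<Sum>t\<in>R. chi t \<alpha>) * Poly_Mapping.lookup (\<sigma> j) \<alpha>"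
      by (rule sum_distrib_right[symmetric])
    also have "(\<Sum>t\<in>R. chi t \<alpha>) = 0" unfolding RA by (rule char_sum_zero[OF that(2)[unfolded RA] odd])
    finally have "Poly_Mapping.lookup (\<sigma>' j) \<alpha> = 0" by simp
    then show False using that(1) by (simp add: supp_def in_keys_iff)
  qed
  show ?thesis using sos' eq' supp' by blast
qed


end
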